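(* $\mathcal{M}_7=\{1,2,6,7,14,294,12642\}$ and $\mathcal{M}_{43}=\{1,2,6,42,43,86,258,77658\}$.
   Context: For positive integers $k,n$ let $S_k(n)=\sum_{i=1}^{n} i^k$. For an integer $a$, $\mathcal{M}_a$ denotes the set of positive integers $n$ such that $S_n(n)\equiv a\pmod{n}$. *)

theory Defs
  imports Main
begin

definition S :: "nat \<Rightarrow> nat \<Rightarrow> int" where
  "S k n = (\<Sum>i=1..n. (int i) ^ k)"

definition M :: "int \<Rightarrow> nat set" where
  "M a = {n. n > 0 \<and> S n n mod int n = a mod int n}"

end

theory Submission
  imports Defs "HOL-Number_Theory.Number_Theory"
begin


lemma per:
  fixes d j k :: nat
  shows "[(\<Sum>i<j*d. i^k) = j * (\<Sum>i<d. i^k)] (mod d)"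
proof -
  have "(\<Sum>i<j*d. i^k) = (\<Sum>m<j. \<Sum>i\<in>{m*d..<m*d+d}. i^k)"
    by (simp add: sum.nat_group)
  also have "\<dots> = (\<Sum>m<j. \<Sum>i<d. (i + m*d)^k)"
  proof (rule sum.cong[OF refl])
    fix m
    have "{m*d..<m*d+d} = {0+m*d..<d+m*d}" by (simp add: add.commute)
    then show "(\<Sum>i\<in>{m*d..<m*d+d}. i^k) = (\<Sum>i<d. (i + m*d)^k)"
      by (simp only: sum.shift_bounds_nat_ivl atLeast0LessThan)
  qed
  finally have e: "(\<Sum>i<j*d. i^k) = (\<Sum>m<j. \<Sum>i<d. (i + m*d)^k)" .
  have "[(\<Sum>m<j. \<Sum>i<d. (i + m*d)^k) = (\<Sum>m<j. \<Sum>i<d. i^k)] (mod d)"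
    by (intro cong_sum cong_pow) (simp add: cong_def)
  then show ?thesis using e by simp
qed

lemma shift_gen: "(\<Sum>i=Suc 0..n. f i) + f 0 = (\<Sum>i<n. f i) + (f n :: nat)"
  by (induction n) (auto simp: algebra_simps)

lemma shiftS:
  fixes n d :: nat
  assumes "n > 0" "d dvd n"
  shows "[(\<Sum>i=1..n. i^n) = (\<Sum>i<n. i^n)] (mod d)"
proof -
  have "(\<Sum>i=Suc 0..n. i^n) = (\<Sum>i<n. i^n) + n^n"
    using shift_gen[where n=n and f="\<lambda>i. i^n"] assms by (simp add: power_0_left)
  moreover have "[(\<Sum>i<n. i^n) + n^n = (\<Sum>i<n. i^n) + 0] (mod d)"
  proof (intro cong_add cong_refl)
    show "[n^n = 0] (mod d)" using dvd_trans[OF assms(2) dvd_power[of n n]] assms by (simp add: cong_0_iff)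
  qed
  ultimately show ?thesis by simp
qed

lemma Snat_per:
  fixes n d :: nat
  assumes "n > 0" "d dvd n"
  shows "[(\<Sum>i=1..n. i^n) = (n div d) * (\<Sum>i<d. i^n)] (mod d)"
proof -
  have "n = (n div d) * d" using assms by simp
  then have "(\<Sum>i<n. i^n) = (\<Sum>i<(n div d)*d. i^n)" by simp
  then have "[(\<Sum>i<n. i^n) = (n div d) * (\<Sum>i<d. i^n)] (mod d)"
    using per[where j="n div d" and d=d and k=n] by simp
  then show ?thesis by (rule cong_trans[OF shiftS[OF assms]])
qed



lemma T_unit:
  fixes q e n :: nat
  assumes q: "prime q" and e: "e > 0" and Qn: "q^e dvd n" and n: "n > 0" and qn: "(q-1) dvd n"
  shows "[(\<Sum>r<q^e. r^n) = totient (q^e)] (mod q^e)"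
proof -
  have q1: "q > 1" using q prime_gt_1_nat by blast
  have Q1: "q^e > 1" using q1 e one_less_power by blast
  have "e < 2^e" by (rule less_exp)
  also have "2^e \<le> q^e" using q1 by (intro power_mono) auto
  also have "q^e \<le> n" using Qn n by (rule dvd_imp_le)
  finally have en: "e \<le> n" by simp
  have tot: "totient (q^e) = q^(e-1) * (q-1)" using totient_prime_power[OF q e] .
  have d1: "q^(e-1) dvd n" using dvd_trans[OF le_imp_power_dvd[of "e-1" e q] Qn] by simp
  have "coprime q (q-1)" by (rule coprime_diff_one_right_nat) (use q1 in simp)
  then have cp: "coprime (q^(e-1)) (q-1)" by (simp add: coprime_power_left_iff)
  have totn: "totient (q^e) dvd n" unfolding tot using divides_mult[OF d1 qn cp] .
  have each: "[r^n = (if coprime r (q^e) then 1 else 0)] (mod q^e)" if "r < q^e" for r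
  proof (cases "coprime r (q^e)")
    case True
    from totn obtain k where k: "n = totient (q^e) * k" by (elim dvdE)
    have "[(r ^ totient (q^e))^k = 1^k] (mod q^e)"
      by (intro cong_pow euler_theorem True)
    then show ?thesis using True k by (simp add: power_mult)
  next
    case False
    then have "\<not> coprime r q" using e by (simp add: coprime_power_right_iff)
    then have "q dvd r" using prime_imp_coprime[OF q] by (metis coprime_commute)
    then have "q^e dvd r^e" by (rule dvd_power_same)
    also have "r^e dvd r^n" using en by (rule le_imp_power_dvd)
    finally show ?thesis using False by (simp add: cong_0_iff)
  qed
  have "[(\<Sum>r<q^e. r^n) = (\<Sum>r<q^e. (if coprime r (q^e) then 1 else 0))] (mod q^e)"
    by (intro cong_sum each) simp
  also have "(\<Sum>r<q^e. (if coprime r (q^e) then 1 else 0)) = card {r\<in>{..<q^e}. coprime r (q^e)}"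
    by (simp add: sum.If_cases Int_def conj_commute)
  also have "{r\<in>{..<q^e}. coprime r (q^e)} = totatives (q^e)"
  proof -
    have nc0: "\<not> coprime (0::nat) q" using q1 by simp
    have ncQ: "\<not> coprime (q^e) q" using q1 e by (simp add: coprime_power_left_iff)
    show ?thesis using Q1 by (auto simp: totatives_def; metis gr0I le_neq_implies_less nc0 ncQ)
  qed
  finally show ?thesis by (simp add: totient_def)
qed

lemma T_nonunit:
  fixes q e n :: nat
  assumes q: "prime q" and e: "e > 0" and qn: "\<not> (q-1) dvd n"
  shows "q^e dvd (\<Sum>r<q^e. r^n)"
proof -
  define Q where "Q = q^e"
  have q1: "q > 1" using q prime_gt_1_nat by blast
  have Q0: "Q > 0" using q1 by (simp add: Q_def)
  obtain g where g: "residue_primroot q g" using prime_primitive_root_exists[OF q1 q] by blast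
  have og: "ord q g = q - 1" and cg: "coprime q g"
    using g q by (auto simp: residue_primroot_def totient_prime)
  have ng: "\<not> [g^n = 1] (mod q)" using og qn by (simp add: ord_divides')
  have cgQ: "coprime g Q" using cg e by (simp add: Q_def coprime_power_right_iff coprime_commute)
  define h where "h r = g*r mod Q" for r
  have inj: "inj_on h {..<Q}"
  proof (rule inj_onI)
    fix r s assume r: "r \<in> {..<Q}" and s: "s \<in> {..<Q}" and hrs: "h r = h s"
    then have "[g*r = g*s] (mod Q)" by (simp add: h_def cong_def)
    then have "[r = s] (mod Q)" using cong_mult_lcancel_nat[OF cgQ] by simp
    then show "r = s" using r s cong_less_modulus_unique_nat by auto
  qed
  have img: "h ` {..<Q} \<subseteq> {..<Q}" using Q0 by (auto simp: h_def)
  have bij: "bij_betw h {..<Q} {..<Q}"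
    using endo_inj_surj[OF _ img inj] inj by (simp add: bij_betw_def)
  define T where "T = (\<Sum>r<Q. r^n)"
  have "T = (\<Sum>r<Q. (h r)^n)" unfolding T_def
    using sum.reindex_bij_betw[OF bij, of "\<lambda>r. r^n"] by simp
  moreover have "[(\<Sum>r<Q. (h r)^n) = (\<Sum>r<Q. (g*r)^n)] (mod Q)"
    by (intro cong_sum cong_pow) (simp add: h_def cong_def)
  moreover have "(\<Sum>r<Q. (g*r)^n) = g^n * T"
    by (simp add: T_def power_mult_distrib sum_distrib_left)
  ultimately have c: "[g^n * T = T] (mod Q)" by (simp add: cong_sym)
  have g0: "g > 0" using cg q1 by (cases "g = 0") auto
  have gn1: "g^n \<ge> 1" using g0 by simp
  have "Q dvd g^n * T - T" using c gn1 by (simp add: cong_altdef_nat)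
  then have d: "Q dvd (g^n - 1) * T" by (simp add: diff_mult_distrib)
  have "\<not> q dvd g^n - 1" using ng gn1 by (simp add: cong_altdef_nat)
  then have "coprime q (g^n - 1)" by (rule prime_imp_coprime[OF q])
  then have "coprime Q (g^n - 1)" using e by (simp add: Q_def coprime_power_left_iff)
  then have "Q dvd T" using d coprime_dvd_mult_right_iff[of Q "g^n - 1" T] by (simp add: mult.commute)
  then show ?thesis by (simp add: Q_def T_def)
qed



lemma S_nat: "S n n = int (\<Sum>i=1..n. i^n)"
  by (simp add: S_def)

lemma keyL:
  fixes q e n :: nat
  assumes q: "prime q" and e: "e > 0" and Qn: "q^e dvd n" and n: "n > 0"
  shows "[S n n = (if (q-1) dvd n then - int (n div q) else 0)] (mod int (q^e))"
proof -
  define Q where "Q = q^e"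
  define k where "k = n div Q"
  have nk: "n = k * Q" using Qn by (simp add: k_def Q_def)
  have per: "[(\<Sum>i=1..n. i^n) = k * (\<Sum>r<Q. r^n)] (mod Q)"
    using Snat_per[OF n Qn] by (simp add: k_def Q_def)
  show ?thesis
  proof (cases "(q-1) dvd n")
    case True
    have "[k * (\<Sum>r<Q. r^n) = k * totient Q] (mod Q)"
      using T_unit[OF q e Qn n True] by (intro cong_mult cong_refl) (simp add: Q_def)
    with per have c: "[(\<Sum>i=1..n. i^n) = k * totient Q] (mod Q)" by (rule cong_trans)
    obtain e' where e': "e = Suc e'" using e by (cases e) auto
    have tQ: "totient Q = q^e' * (q-1)" using totient_prime_power_Suc[OF q] by (simp add: Q_def e')
    have ndq: "n div q = k * q^e'" using q nk by (simp add: Q_def e' prime_gt_0_nat)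
    have q1: "q \<ge> 1" using q prime_gt_0_nat by (simp add: Suc_leI)
    have iq: "int (q - Suc 0) = int q - 1" using q1 by simp
    have "int (k * totient Q) - (- int (n div q)) = int k * (int q ^ e' * (int q - 1)) + int k * int q ^ e'"
      by (simp add: tQ ndq iq)
    also have "\<dots> = int k * int Q" by (simp add: Q_def e' algebra_simps)
    finally have "[int (k * totient Q) = - int (n div q)] (mod int Q)"
      by (simp add: cong_iff_dvd_diff)
    moreover have "[S n n = int (k * totient Q)] (mod int Q)"
      unfolding S_nat cong_int_iff by (rule c)
    ultimately show ?thesis using True by (simp add: Q_def cong_trans)
  next
    case False
    have "Q dvd (\<Sum>r<Q. r^n)" using T_nonunit[OF q e False] by (simp add: Q_def)
    then have "[(\<Sum>i=1..n. i^n) = 0] (mod Q)" using per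
      by (metis cong_0_iff cong_dvd_iff dvd_mult)
    then have "[S n n = int 0] (mod int Q)" unfolding S_nat cong_int_iff .
    then show ?thesis using False by (simp add: Q_def)
  qed
qed

lemma F:
  fixes q e n :: nat
  assumes nM: "n \<in> M a" and q: "prime q" and e: "e > 0" and Qn: "q^e dvd n"
  shows "int (q^e) dvd a + (if (q-1) dvd n then int (n div q) else 0)"
proof -
  have n: "n > 0" and m: "S n n mod int n = a mod int n" using nM by (auto simp: M_def)
  have "[S n n = a] (mod int n)" using m by (simp add: cong_def)
  then have c1: "[S n n = a] (mod int (q^e))"
    by (rule cong_dvd_modulus) (metis Qn int_dvd_int_iff of_nat_power)
  note c2 = keyL[OF q e Qn n]
  from c1 c2 have "[a = (if (q-1) dvd n then - int (n div q) else 0)] (mod int (q^e))"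
    by (metis cong_sym cong_trans)
  then show ?thesis by (cases "(q-1) dvd n") (auto simp: cong_iff_dvd_diff cong_0_iff dvd_minus_iff)
qed

lemma dvd_neg: fixes x a b :: int assumes "x dvd a + b" shows "x dvd -b - a"
proof -
  have e: "-b - a = -(a+b)" by simp
  show ?thesis unfolding e dvd_minus_iff by (rule assms)
qed

lemma R:
  fixes q e n :: nat
  assumes n: "n > 0" and q: "prime q" and e: "e > 0" and Qn: "q^e dvd n"
    and d: "int (q^e) dvd a + (if (q-1) dvd n then int (n div q) else 0)"
  shows "int (q^e) dvd S n n - a"
proof -
  note c2 = keyL[OF q e Qn n]
  have "[(if (q-1) dvd n then - int (n div q) else 0) = a] (mod int (q^e))"
    using d dvd_neg[of "int (q^e)" a "int (n div q)"]
    by (cases "(q-1) dvd n") (auto simp: cong_iff_dvd_diff cong_0_iff dvd_minus_iff cong_sym_eq)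
  with c2 have "[S n n = a] (mod int (q^e))" by (rule cong_trans)
  then show ?thesis by (simp add: cong_iff_dvd_diff)
qed

lemma memM: "n > 0 \<Longrightarrow> int n dvd S n n - a \<Longrightarrow> n \<in> M a"
  by (simp add: M_def mod_eq_dvd_iff)


lemma pr2: "prime (2::nat)" by simp
lemma pr3: "prime (3::nat)" by simp
lemma pr7: "prime (7::nat)" by simp
lemma pr43: "prime (43::nat)" by simp
lemma pos1: "(0::nat) < 1" by simp
lemma pos2: "(0::nat) < 2" by simp
lemma pos3: "(0::nat) < 3" by simp


lemma np:
  fixes a b :: nat
  assumes "1 < a" "1 < b" shows "\<not> prime (a*b)"
proof
  assume "prime (a*b)"
  then have "a = 1 \<or> b = 1" by (rule prime_product)
  then show False using assms by auto
qed

lemma divs_base: "{d. d dvd (1::nat)} \<subseteq> {1}" by simp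

lemma divs_step:
  fixes p X :: nat
  assumes p: "prime p" and A: "{d. d dvd X} \<subseteq> A"
  shows "{d. d dvd p*X} \<subseteq> A \<union> (\<lambda>d. p*d) ` A"
proof
  fix d assume "d \<in> {d. d dvd p*X}"
  then obtain b c where bc: "d = b*c" "b dvd p" "c dvd X" using division_decomp by blast
  have cA: "c \<in> A" using A bc(3) by blast
  from bc(2) p have "b = 1 \<or> b = p" by (metis prime_nat_iff)
  then show "d \<in> A \<union> (\<lambda>d. p*d) ` A" using bc(1) cA by auto
qed

lemma dvd_via_pp:
  fixes x y :: nat
  assumes x: "x \<noteq> 0" and h: "\<And>r k. prime r \<Longrightarrow> r^k dvd x \<Longrightarrow> r^k dvd y"
  shows "x dvd y"
proof (cases "y = 0")
  case True thus ?thesis by simp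
next
  case False
  show ?thesis
  proof (rule multiplicity_le_imp_dvd[OF x])
    fix p :: nat assume p: "prime p"
    have "p ^ multiplicity p x dvd y" by (rule h[OF p multiplicity_dvd])
    moreover have "\<not> is_unit p" using p by (metis not_prime_unit)
    ultimately show "multiplicity p x \<le> multiplicity p y"
      using power_dvd_iff_le_multiplicity[OF False] by blast
  qed
qed

lemma loc1:
  fixes a q n :: nat
  assumes nM: "n \<in> M (int a)" and a: "prime a" and q: "prime q" and qn: "q dvd n" and qa: "q \<noteq> a"
  shows "(q-1) dvd n"
proof (rule ccontr)
  assume nd: "\<not> (q-1) dvd n"
  have "int (q^1) dvd int a + (if (q-1) dvd n then int (n div q) else 0)"
    using F[OF nM q pos1] qn by simp
  then have "q dvd a" using nd by simp
  then show False using qa primes_dvd_imp_eq[OF q a] by blast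
qed

lemma loc2a:
  fixes a q n :: nat
  assumes nM: "n \<in> M (int a)" and a: "prime a" and q: "prime q" and qn: "q^2 dvd n"
  shows "q = a"
proof -
  have d: "int (q^2) dvd int a + (if (q-1) dvd n then int (n div q) else 0)"
    using F[OF nM q pos2 qn] by simp
  obtain c where c: "n = q^2 * c" using qn by (elim dvdE)
  have ndq: "n div q = q * c" using q c by (simp add: power2_eq_square prime_gt_0_nat)
  have "int q dvd (if (q-1) dvd n then int (n div q) else 0)" using ndq by simp
  moreover have "int q dvd int a + (if (q-1) dvd n then int (n div q) else 0)"
    by (rule dvd_trans[OF _ d]) (simp add: power2_eq_square)
  ultimately have "int q dvd int a" using dvd_add_left_iff by blast
  then have "q dvd a" by simp
  then show ?thesis using primes_dvd_imp_eq[OF q a] by blast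
qed

lemma loc2b:
  fixes a n :: nat
  assumes nM: "n \<in> M (int a)" and a: "prime a"
  shows "\<not> a^3 dvd n"
proof
  assume qn: "a^3 dvd n"
  have d: "int (a^3) dvd int a + (if (a-1) dvd n then int (n div a) else 0)"
    using F[OF nM a pos3 qn] by simp
  obtain c where c: "n = a^3 * c" using qn by (elim dvdE)
  have ndq: "n div a = a^2 * c" using a c by (simp add: power3_eq_cube power2_eq_square prime_gt_0_nat)
  have "int (a^2) dvd (if (a-1) dvd n then int (n div a) else 0)" using ndq by simp
  moreover have "int (a^2) dvd int a + (if (a-1) dvd n then int (n div a) else 0)"
    by (rule dvd_trans[OF _ d]) (simp add: power3_eq_cube power2_eq_square)
  ultimately have "int (a^2) dvd int a" using dvd_add_left_iff by blast
  then have "a^2 dvd a" by (simp only: int_dvd_int_iff)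
  then have "a^2 \<le> a" using a prime_gt_0_nat dvd_imp_le by blast
  moreover have "a < a^2" using prime_gt_1_nat[OF a] by (simp add: power2_eq_square)
  ultimately show False by simp
qed

lemma loc2:
  fixes a r k n :: nat
  assumes nM: "n \<in> M (int a)" and a: "prime a" and r: "prime r" and rk: "r^k dvd n"
  shows "k \<le> 1 \<or> (r = a \<and> k \<le> 2)"
proof (cases "k \<le> 1")
  case True thus ?thesis by simp
next
  case False
  have "r^2 dvd r^k" using False by (intro le_imp_power_dvd) simp
  then have ra: "r = a" using loc2a[OF nM a r dvd_trans[OF _ rk]] by blast
  have "k \<le> 2"
  proof (rule ccontr)
    assume "\<not> k \<le> 2"
    then have "a^3 dvd a^k" by (intro le_imp_power_dvd) simp
    then have "a^3 dvd n" using dvd_trans[OF _ rk] ra by blast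
    then show False using loc2b[OF nM a] by blast
  qed
  then show ?thesis using ra by simp
qed


lemma prime_check:
  fixes p s :: nat
  assumes p1: "1 < p" and ps: "p < (s+1)*(s+1)" and h: "\<forall>k\<in>{2..<s+1}. \<not> k dvd p"
  shows "prime p"
proof (rule ccontr)
  assume np: "\<not> prime p"
  obtain r where r: "prime r" "r dvd p" using prime_factor_nat[of p] p1 by auto
  have rp: "r \<noteq> p" using r np by auto
  obtain m where m: "p = r*m" using r(2) by (elim dvdE)
  have r2: "r \<ge> 2" using prime_ge_2_nat r(1) by blast
  have m0: "m \<noteq> 0" using m p1 by (cases "m = 0") auto
  have m1: "m \<noteq> 1" using m rp by auto
  have m2: "m \<ge> 2" using m0 m1 by linarith
  define k where "k = min r m"
  have kk: "k*k \<le> r*m" by (simp add: k_def min_def mult_le_mono)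
  have k2: "k \<ge> 2" using r2 m2 by (simp add: k_def)
  have kd: "k dvd p" using m by (auto simp: k_def min_def)
  have "k < s+1"
  proof (rule ccontr)
    assume "\<not> k < s+1"
    then have "(s+1)*(s+1) \<le> k*k" by (intro mult_le_mono) auto
    then show False using kk ps m by linarith
  qed
  then show False using h k2 kd by auto
qed

lemma pr77659: "prime (77659::nat)"
  by (rule prime_check[of _ 278]) (simp_all add: atLeastLessThan_upt upt_rec)
lemma divs_7: assumes "d dvd (12642::nat)" shows "d \<in> {1, 2, 3, 6, 7, 14, 21, 42, 43, 49, 86, 98, 129, 147, 258, 294, 301, 602, 903, 1806, 2107, 4214, 6321, 12642}"
proof -
  note h = divs_step[OF pr2, OF divs_step[OF pr3, OF divs_step[OF pr7, OF divs_step[OF pr7, OF divs_step[OF pr43, OF divs_base]]]]]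
  have "d \<in> {x. x dvd (2*(3*(7*(7*(43*(1::nat))))))}" using assms by simp
  from subsetD[OF h this] show ?thesis by auto
qed

lemma comp_7_0: "\<not> prime (4::nat)"
proof -
  have e: "(4::nat) = 2 * 2" by simp
  show ?thesis unfolding e by (rule np) simp_all
qed
lemma comp_7_1: "\<not> prime (8::nat)"
proof -
  have e: "(8::nat) = 2 * 4" by simp
  show ?thesis unfolding e by (rule np) simp_all
qed
lemma comp_7_2: "\<not> prime (15::nat)"
proof -
  have e: "(15::nat) = 3 * 5" by simp
  show ?thesis unfolding e by (rule np) simp_all
qed
lemma comp_7_3: "\<not> prime (22::nat)"
proof -
  have e: "(22::nat) = 2 * 11" by simp
  show ?thesis unfolding e by (rule np) simp_all
qed
lemma comp_7_4: "\<not> prime (44::nat)"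
proof -
  have e: "(44::nat) = 2 * 22" by simp
  show ?thesis unfolding e by (rule np) simp_all
qed
lemma comp_7_5: "\<not> prime (50::nat)"
proof -
  have e: "(50::nat) = 2 * 25" by simp
  show ?thesis unfolding e by (rule np) simp_all
qed
lemma comp_7_6: "\<not> prime (87::nat)"
proof -
  have e: "(87::nat) = 3 * 29" by simp
  show ?thesis unfolding e by (rule np) simp_all
qed
lemma comp_7_7: "\<not> prime (99::nat)"
proof -
  have e: "(99::nat) = 3 * 33" by simp
  show ?thesis unfolding e by (rule np) simp_all
qed
lemma comp_7_8: "\<not> prime (130::nat)"
proof -
  have e: "(130::nat) = 2 * 65" by simp
  show ?thesis unfolding e by (rule np) simp_all
qed
lemma comp_7_9: "\<not> prime (148::nat)"
proof -
  have e: "(148::nat) = 2 * 74" by simp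
  show ?thesis unfolding e by (rule np) simp_all
qed
lemma comp_7_10: "\<not> prime (259::nat)"
proof -
  have e: "(259::nat) = 7 * 37" by simp
  show ?thesis unfolding e by (rule np) simp_all
qed
lemma comp_7_11: "\<not> prime (295::nat)"
proof -
  have e: "(295::nat) = 5 * 59" by simp
  show ?thesis unfolding e by (rule np) simp_all
qed
lemma comp_7_12: "\<not> prime (302::nat)"
proof -
  have e: "(302::nat) = 2 * 151" by simp
  show ?thesis unfolding e by (rule np) simp_all
qed
lemma comp_7_13: "\<not> prime (603::nat)"
proof -
  have e: "(603::nat) = 3 * 201" by simp
  show ?thesis unfolding e by (rule np) simp_all
qed
lemma comp_7_14: "\<not> prime (904::nat)"
proof -
  have e: "(904::nat) = 2 * 452" by simp
  show ?thesis unfolding e by (rule np) simp_all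
qed
lemma comp_7_15: "\<not> prime (1807::nat)"
proof -
  have e: "(1807::nat) = 13 * 139" by simp
  show ?thesis unfolding e by (rule np) simp_all
qed
lemma comp_7_16: "\<not> prime (2108::nat)"
proof -
  have e: "(2108::nat) = 2 * 1054" by simp
  show ?thesis unfolding e by (rule np) simp_all
qed
lemma comp_7_17: "\<not> prime (4215::nat)"
proof -
  have e: "(4215::nat) = 3 * 1405" by simp
  show ?thesis unfolding e by (rule np) simp_all
qed
lemma comp_7_18: "\<not> prime (6322::nat)"
proof -
  have e: "(6322::nat) = 2 * 3161" by simp
  show ?thesis unfolding e by (rule np) simp_all
qed
lemma comp_7_19: "\<not> prime (12643::nat)"
proof -
  have e: "(12643::nat) = 47 * 269" by simp
  show ?thesis unfolding e by (rule np) simp_all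
qed
lemmas comps_7 = comp_7_0 comp_7_1 comp_7_2 comp_7_3 comp_7_4 comp_7_5 comp_7_6 comp_7_7 comp_7_8 comp_7_9 comp_7_10 comp_7_11 comp_7_12 comp_7_13 comp_7_14 comp_7_15 comp_7_16 comp_7_17 comp_7_18 comp_7_19

lemma fwd_7: assumes nM: "n \<in> M 7" shows "n \<in> {1, 2, 6, 7, 14, 294, 12642}"
proof -
  have a: "prime (7::nat)" by simp
  have nM': "n \<in> M (int 7)" using nM by simp
  note L1 = loc1[OF nM' a]
  note L2 = loc2[OF nM' a]
  have n0: "n > 0" using nM by (simp add: M_def)
  have cl: "q \<in> {3, 2, 43, 7}" if "prime q" "q dvd n" for q
    using that
  proof (induction q rule: less_induct)
    case (less q)
    show ?case
    proof (cases "q = 7")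
      case True thus ?thesis by simp
    next
      case False
      have qn: "(q-1) dvd n" using L1 less.prems False by blast
      have q2: "q \<ge> 2" using prime_ge_2_nat less.prems by blast
      have "(q-1) dvd 12642"
      proof (rule dvd_via_pp)
        show "q - 1 \<noteq> 0" using q2 by simp
        fix r k assume r: "prime r" and rk: "r^k dvd q - 1"
        show "r^k dvd 12642"
        proof (cases "k = 0")
          case True thus ?thesis by simp
        next
          case False
          have rq1: "r dvd q - 1" using rk False dvd_trans[OF dvd_power[of k r]] by auto
          then have "r \<le> q - 1" using q2 by (intro dvd_imp_le) auto
          then have rq: "r < q" using q2 by simp
          have "r dvd n" using rq1 qn dvd_trans by blast
          have rin: "r \<in> {3, 2, 43, 7}" using less.IH[OF rq r \<open>r dvd n\<close>] .
          have "k \<le> 1 \<or> (r = 7 \<and> k \<le> 2)" using L2[OF r dvd_trans[OF rk qn]] .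
          then have "k = 1 \<or> (r = 7 \<and> k = 2)" using False by auto
          then show ?thesis using rin by auto
        qed
      qed
      then have "q - 1 \<in> {1, 2, 3, 6, 7, 14, 21, 42, 43, 49, 86, 98, 129, 147, 258, 294, 301, 602, 903, 1806, 2107, 4214, 6321, 12642}" by (rule divs_7)
      then show ?thesis
      proof (elim insertE emptyE)
        assume "q - 1 = 1" then have "q = 2" using q2 by arith then show ?thesis by simp
      next
        assume "q - 1 = 2" then have "q = 3" using q2 by arith then show ?thesis by simp
      next
        assume "q - 1 = 3" then have "q = 4" using q2 by arith then show ?thesis using less.prems(1) comp_7_0 by blast
      next
        assume "q - 1 = 6" then have "q = 7" using q2 by arith then show ?thesis by simp
      next
        assume "q - 1 = 7" then have "q = 8" using q2 by arith then show ?thesis using less.prems(1) comp_7_1 by blast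
      next
        assume "q - 1 = 14" then have "q = 15" using q2 by arith then show ?thesis using less.prems(1) comp_7_2 by blast
      next
        assume "q - 1 = 21" then have "q = 22" using q2 by arith then show ?thesis using less.prems(1) comp_7_3 by blast
      next
        assume "q - 1 = 42" then have "q = 43" using q2 by arith then show ?thesis by simp
      next
        assume "q - 1 = 43" then have "q = 44" using q2 by arith then show ?thesis using less.prems(1) comp_7_4 by blast
      next
        assume "q - 1 = 49" then have "q = 50" using q2 by arith then show ?thesis using less.prems(1) comp_7_5 by blast
      next
        assume "q - 1 = 86" then have "q = 87" using q2 by arith then show ?thesis using less.prems(1) comp_7_6 by blast
      next
        assume "q - 1 = 98" then have "q = 99" using q2 by arith then show ?thesis using less.prems(1) comp_7_7 by blast
      next
        assume "q - 1 = 129" then have "q = 130" using q2 by arith then show ?thesis using less.prems(1) comp_7_8 by blast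
      next
        assume "q - 1 = 147" then have "q = 148" using q2 by arith then show ?thesis using less.prems(1) comp_7_9 by blast
      next
        assume "q - 1 = 258" then have "q = 259" using q2 by arith then show ?thesis using less.prems(1) comp_7_10 by blast
      next
        assume "q - 1 = 294" then have "q = 295" using q2 by arith then show ?thesis using less.prems(1) comp_7_11 by blast
      next
        assume "q - 1 = 301" then have "q = 302" using q2 by arith then show ?thesis using less.prems(1) comp_7_12 by blast
      next
        assume "q - 1 = 602" then have "q = 603" using q2 by arith then show ?thesis using less.prems(1) comp_7_13 by blast
      next
        assume "q - 1 = 903" then have "q = 904" using q2 by arith then show ?thesis using less.prems(1) comp_7_14 by blast
      next
        assume "q - 1 = 1806" then have "q = 1807" using q2 by arith then show ?thesis using less.prems(1) comp_7_15 by blast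
      next
        assume "q - 1 = 2107" then have "q = 2108" using q2 by arith then show ?thesis using less.prems(1) comp_7_16 by blast
      next
        assume "q - 1 = 4214" then have "q = 4215" using q2 by arith then show ?thesis using less.prems(1) comp_7_17 by blast
      next
        assume "q - 1 = 6321" then have "q = 6322" using q2 by arith then show ?thesis using less.prems(1) comp_7_18 by blast
      next
        assume "q - 1 = 12642" then have "q = 12643" using q2 by arith then show ?thesis using less.prems(1) comp_7_19 by blast
      qed
    qed
  qed
  have nB: "n dvd 12642"
  proof (rule dvd_via_pp)
    show "n \<noteq> 0" using n0 by simp
    fix r k assume r: "prime r" and rk: "r^k dvd n"
    show "r^k dvd 12642"
    proof (cases "k = 0")
      case True thus ?thesis by simp
    next
      case False
      have "r dvd n" using rk False dvd_trans[OF dvd_power[of k r]] by auto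
      have rin: "r \<in> {3, 2, 43, 7}" using cl[OF r \<open>r dvd n\<close>] .
      have "k \<le> 1 \<or> (r = 7 \<and> k \<le> 2)" using L2[OF r rk] .
      then have "k = 1 \<or> (r = 7 \<and> k = 2)" using False by auto
      then show ?thesis using rin by auto
    qed
  qed
  note f2_1 = F[OF nM pr2 pos1]
  note f2_2 = F[OF nM pr2 pos2]
  note f3_1 = F[OF nM pr3 pos1]
  note f3_2 = F[OF nM pr3 pos2]
  note f7_1 = F[OF nM pr7 pos1]
  note f7_2 = F[OF nM pr7 pos2]
  note f43_1 = F[OF nM pr43 pos1]
  note f43_2 = F[OF nM pr43 pos2]
  have "n \<in> {1, 2, 3, 6, 7, 14, 21, 42, 43, 49, 86, 98, 129, 147, 258, 294, 301, 602, 903, 1806, 2107, 4214, 6321, 12642}" using nB by (rule divs_7)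
  then have "n = 1 \<or> n = 2 \<or> n = 3 \<or> n = 6 \<or> n = 7 \<or> n = 14 \<or> n = 21 \<or> n = 42 \<or> n = 43 \<or> n = 49 \<or> n = 86 \<or> n = 98 \<or> n = 129 \<or> n = 147 \<or> n = 258 \<or> n = 294 \<or> n = 301 \<or> n = 602 \<or> n = 903 \<or> n = 1806 \<or> n = 2107 \<or> n = 4214 \<or> n = 6321 \<or> n = 12642" by simp
  then show ?thesis using f2_1 f2_2 f3_1 f3_2 f7_1 f7_2 f43_1 f43_2 by (elim disjE) simp_all
qed

lemma bwd_7: assumes "n \<in> {1, 2, 6, 7, 14, 294, 12642}" shows "n \<in> M 7"
proof -
  have m0: "1 \<in> M 7"
  proof (rule memM)
    show "(0::nat) < 1" by simp
    show "int 1 dvd S 1 1 - 7" by simp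
  qed
  have m1: "2 \<in> M 7"
  proof (rule memM)
    show "(0::nat) < 2" by simp
    have d0: "int (2^1) dvd S 2 2 - 7" by (rule R) simp_all
    show "int 2 dvd S 2 2 - 7" using d0 by simp
  qed
  have m2: "6 \<in> M 7"
  proof (rule memM)
    show "(0::nat) < 6" by simp
    have d0: "int (2^1) dvd S 6 6 - 7" by (rule R) simp_all
    have d1: "int (3^1) dvd S 6 6 - 7" by (rule R) simp_all
    have c1: "int (2^1) * int (3^1) dvd S 6 6 - 7" by (rule divides_mult[OF d0 d1]) (simp add: coprime_iff_gcd_eq_1 gcd_non_0_int)
    show "int 6 dvd S 6 6 - 7" using c1 by simp
  qed
  have m3: "7 \<in> M 7"
  proof (rule memM)
    show "(0::nat) < 7" by simp
    have d0: "int (7^1) dvd S 7 7 - 7" by (rule R) simp_all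
    show "int 7 dvd S 7 7 - 7" using d0 by simp
  qed
  have m4: "14 \<in> M 7"
  proof (rule memM)
    show "(0::nat) < 14" by simp
    have d0: "int (2^1) dvd S 14 14 - 7" by (rule R) simp_all
    have d1: "int (7^1) dvd S 14 14 - 7" by (rule R) simp_all
    have c1: "int (2^1) * int (7^1) dvd S 14 14 - 7" by (rule divides_mult[OF d0 d1]) (simp add: coprime_iff_gcd_eq_1 gcd_non_0_int)
    show "int 14 dvd S 14 14 - 7" using c1 by simp
  qed
  have m5: "294 \<in> M 7"
  proof (rule memM)
    show "(0::nat) < 294" by simp
    have d0: "int (2^1) dvd S 294 294 - 7" by (rule R) simp_all
    have d1: "int (3^1) dvd S 294 294 - 7" by (rule R) simp_all
    have d2: "int (7^2) dvd S 294 294 - 7" by (rule R) simp_all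
    have c1: "int (2^1) * int (3^1) dvd S 294 294 - 7" by (rule divides_mult[OF d0 d1]) (simp add: coprime_iff_gcd_eq_1 gcd_non_0_int)
    have c2: "(int (2^1) * int (3^1)) * int (7^2) dvd S 294 294 - 7" by (rule divides_mult[OF c1 d2]) (simp add: coprime_iff_gcd_eq_1 gcd_non_0_int)
    show "int 294 dvd S 294 294 - 7" using c2 by simp
  qed
  have m6: "12642 \<in> M 7"
  proof (rule memM)
    show "(0::nat) < 12642" by simp
    have d0: "int (2^1) dvd S 12642 12642 - 7" by (rule R) simp_all
    have d1: "int (3^1) dvd S 12642 12642 - 7" by (rule R) simp_all
    have d2: "int (7^2) dvd S 12642 12642 - 7" by (rule R) simp_all
    have d3: "int (43^1) dvd S 12642 12642 - 7" by (rule R) simp_all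
    have c1: "int (2^1) * int (3^1) dvd S 12642 12642 - 7" by (rule divides_mult[OF d0 d1]) (simp add: coprime_iff_gcd_eq_1 gcd_non_0_int)
    have c2: "(int (2^1) * int (3^1)) * int (7^2) dvd S 12642 12642 - 7" by (rule divides_mult[OF c1 d2]) (simp add: coprime_iff_gcd_eq_1 gcd_non_0_int)
    have c3: "((int (2^1) * int (3^1)) * int (7^2)) * int (43^1) dvd S 12642 12642 - 7" by (rule divides_mult[OF c2 d3]) (simp add: coprime_iff_gcd_eq_1 gcd_non_0_int)
    show "int 12642 dvd S 12642 12642 - 7" using c3 by simp
  qed
  show ?thesis using assms m0 m1 m2 m3 m4 m5 m6 by auto
qed

lemma divs_43: assumes "d dvd (6030842622::nat)" shows "d \<in> {1, 2, 3, 6, 7, 14, 21, 42, 43, 86, 129, 258, 301, 602, 903, 1806, 1849, 3698, 5547, 11094, 12943, 25886, 38829, 77658, 77659, 155318, 232977, 465954, 543613, 1087226, 1630839, 3261678, 3339337, 6678674, 10018011, 20036022, 23375359, 46750718, 70126077, 140252154, 143591491, 287182982, 430774473, 861548946, 1005140437, 2010280874, 3015421311, 6030842622}"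
proof -
  note h = divs_step[OF pr2, OF divs_step[OF pr3, OF divs_step[OF pr7, OF divs_step[OF pr43, OF divs_step[OF pr43, OF divs_step[OF pr77659, OF divs_base]]]]]]
  have "d \<in> {x. x dvd (2*(3*(7*(43*(43*(77659*(1::nat)))))))}" using assms by simp
  from subsetD[OF h this] show ?thesis by auto
qed

lemma comp_43_0: "\<not> prime (4::nat)"
proof -
  have e: "(4::nat) = 2 * 2" by simp
  show ?thesis unfolding e by (rule np) simp_all
qed
lemma comp_43_1: "\<not> prime (8::nat)"
proof -
  have e: "(8::nat) = 2 * 4" by simp
  show ?thesis unfolding e by (rule np) simp_all
qed
lemma comp_43_2: "\<not> prime (15::nat)"
proof -
  have e: "(15::nat) = 3 * 5" by simp
  show ?thesis unfolding e by (rule np) simp_all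
qed
lemma comp_43_3: "\<not> prime (22::nat)"
proof -
  have e: "(22::nat) = 2 * 11" by simp
  show ?thesis unfolding e by (rule np) simp_all
qed
lemma comp_43_4: "\<not> prime (44::nat)"
proof -
  have e: "(44::nat) = 2 * 22" by simp
  show ?thesis unfolding e by (rule np) simp_all
qed
lemma comp_43_5: "\<not> prime (87::nat)"
proof -
  have e: "(87::nat) = 3 * 29" by simp
  show ?thesis unfolding e by (rule np) simp_all
qed
lemma comp_43_6: "\<not> prime (130::nat)"
proof -
  have e: "(130::nat) = 2 * 65" by simp
  show ?thesis unfolding e by (rule np) simp_all
qed
lemma comp_43_7: "\<not> prime (259::nat)"
proof -
  have e: "(259::nat) = 7 * 37" by simp
  show ?thesis unfolding e by (rule np) simp_all
qed
lemma comp_43_8: "\<not> prime (302::nat)"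
proof -
  have e: "(302::nat) = 2 * 151" by simp
  show ?thesis unfolding e by (rule np) simp_all
qed
lemma comp_43_9: "\<not> prime (603::nat)"
proof -
  have e: "(603::nat) = 3 * 201" by simp
  show ?thesis unfolding e by (rule np) simp_all
qed
lemma comp_43_10: "\<not> prime (904::nat)"
proof -
  have e: "(904::nat) = 2 * 452" by simp
  show ?thesis unfolding e by (rule np) simp_all
qed
lemma comp_43_11: "\<not> prime (1807::nat)"
proof -
  have e: "(1807::nat) = 13 * 139" by simp
  show ?thesis unfolding e by (rule np) simp_all
qed
lemma comp_43_12: "\<not> prime (1850::nat)"
proof -
  have e: "(1850::nat) = 2 * 925" by simp
  show ?thesis unfolding e by (rule np) simp_all
qed
lemma comp_43_13: "\<not> prime (3699::nat)"
proof -
  have e: "(3699::nat) = 3 * 1233" by simp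
  show ?thesis unfolding e by (rule np) simp_all
qed
lemma comp_43_14: "\<not> prime (5548::nat)"
proof -
  have e: "(5548::nat) = 2 * 2774" by simp
  show ?thesis unfolding e by (rule np) simp_all
qed
lemma comp_43_15: "\<not> prime (11095::nat)"
proof -
  have e: "(11095::nat) = 5 * 2219" by simp
  show ?thesis unfolding e by (rule np) simp_all
qed
lemma comp_43_16: "\<not> prime (12944::nat)"
proof -
  have e: "(12944::nat) = 2 * 6472" by simp
  show ?thesis unfolding e by (rule np) simp_all
qed
lemma comp_43_17: "\<not> prime (25887::nat)"
proof -
  have e: "(25887::nat) = 3 * 8629" by simp
  show ?thesis unfolding e by (rule np) simp_all
qed
lemma comp_43_18: "\<not> prime (38830::nat)"
proof -
  have e: "(38830::nat) = 2 * 19415" by simp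
  show ?thesis unfolding e by (rule np) simp_all
qed
lemma comp_43_19: "\<not> prime (77660::nat)"
proof -
  have e: "(77660::nat) = 2 * 38830" by simp
  show ?thesis unfolding e by (rule np) simp_all
qed
lemma comp_43_20: "\<not> prime (155319::nat)"
proof -
  have e: "(155319::nat) = 3 * 51773" by simp
  show ?thesis unfolding e by (rule np) simp_all
qed
lemma comp_43_21: "\<not> prime (232978::nat)"
proof -
  have e: "(232978::nat) = 2 * 116489" by simp
  show ?thesis unfolding e by (rule np) simp_all
qed
lemma comp_43_22: "\<not> prime (465955::nat)"
proof -
  have e: "(465955::nat) = 5 * 93191" by simp
  show ?thesis unfolding e by (rule np) simp_all
qed
lemma comp_43_23: "\<not> prime (543614::nat)"
proof -
  have e: "(543614::nat) = 2 * 271807" by simp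
  show ?thesis unfolding e by (rule np) simp_all
qed
lemma comp_43_24: "\<not> prime (1087227::nat)"
proof -
  have e: "(1087227::nat) = 3 * 362409" by simp
  show ?thesis unfolding e by (rule np) simp_all
qed
lemma comp_43_25: "\<not> prime (1630840::nat)"
proof -
  have e: "(1630840::nat) = 2 * 815420" by simp
  show ?thesis unfolding e by (rule np) simp_all
qed
lemma comp_43_26: "\<not> prime (3261679::nat)"
proof -
  have e: "(3261679::nat) = 43 * 75853" by simp
  show ?thesis unfolding e by (rule np) simp_all
qed
lemma comp_43_27: "\<not> prime (3339338::nat)"
proof -
  have e: "(3339338::nat) = 2 * 1669669" by simp
  show ?thesis unfolding e by (rule np) simp_all
qed
lemma comp_43_28: "\<not> prime (6678675::nat)"
proof -
  have e: "(6678675::nat) = 3 * 2226225" by simp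
  show ?thesis unfolding e by (rule np) simp_all
qed
lemma comp_43_29: "\<not> prime (10018012::nat)"
proof -
  have e: "(10018012::nat) = 2 * 5009006" by simp
  show ?thesis unfolding e by (rule np) simp_all
qed
lemma comp_43_30: "\<not> prime (20036023::nat)"
proof -
  have e: "(20036023::nat) = 7 * 2862289" by simp
  show ?thesis unfolding e by (rule np) simp_all
qed
lemma comp_43_31: "\<not> prime (23375360::nat)"
proof -
  have e: "(23375360::nat) = 2 * 11687680" by simp
  show ?thesis unfolding e by (rule np) simp_all
qed
lemma comp_43_32: "\<not> prime (46750719::nat)"
proof -
  have e: "(46750719::nat) = 3 * 15583573" by simp
  show ?thesis unfolding e by (rule np) simp_all
qed
lemma comp_43_33: "\<not> prime (70126078::nat)"
proof -
  have e: "(70126078::nat) = 2 * 35063039" by simp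
  show ?thesis unfolding e by (rule np) simp_all
qed
lemma comp_43_34: "\<not> prime (140252155::nat)"
proof -
  have e: "(140252155::nat) = 5 * 28050431" by simp
  show ?thesis unfolding e by (rule np) simp_all
qed
lemma comp_43_35: "\<not> prime (143591492::nat)"
proof -
  have e: "(143591492::nat) = 2 * 71795746" by simp
  show ?thesis unfolding e by (rule np) simp_all
qed
lemma comp_43_36: "\<not> prime (287182983::nat)"
proof -
  have e: "(287182983::nat) = 3 * 95727661" by simp
  show ?thesis unfolding e by (rule np) simp_all
qed
lemma comp_43_37: "\<not> prime (430774474::nat)"
proof -
  have e: "(430774474::nat) = 2 * 215387237" by simp
  show ?thesis unfolding e by (rule np) simp_all
qed
lemma comp_43_38: "\<not> prime (861548947::nat)"
proof -
  have e: "(861548947::nat) = 7 * 123078421" by simp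
  show ?thesis unfolding e by (rule np) simp_all
qed
lemma comp_43_39: "\<not> prime (1005140438::nat)"
proof -
  have e: "(1005140438::nat) = 2 * 502570219" by simp
  show ?thesis unfolding e by (rule np) simp_all
qed
lemma comp_43_40: "\<not> prime (2010280875::nat)"
proof -
  have e: "(2010280875::nat) = 3 * 670093625" by simp
  show ?thesis unfolding e by (rule np) simp_all
qed
lemma comp_43_41: "\<not> prime (3015421312::nat)"
proof -
  have e: "(3015421312::nat) = 2 * 1507710656" by simp
  show ?thesis unfolding e by (rule np) simp_all
qed
lemma comp_43_42: "\<not> prime (6030842623::nat)"
proof -
  have e: "(6030842623::nat) = 13 * 463910971" by simp
  show ?thesis unfolding e by (rule np) simp_all
qed
lemmas comps_43 = comp_43_0 comp_43_1 comp_43_2 comp_43_3 comp_43_4 comp_43_5 comp_43_6 comp_43_7 comp_43_8 comp_43_9 comp_43_10 comp_43_11 comp_43_12 comp_43_13 comp_43_14 comp_43_15 comp_43_16 comp_43_17 comp_43_18 comp_43_19 comp_43_20 comp_43_21 comp_43_22 comp_43_23 comp_43_24 comp_43_25 comp_43_26 comp_43_27 comp_43_28 comp_43_29 comp_43_30 comp_43_31 comp_43_32 comp_43_33 comp_43_34 comp_43_35 comp_43_36 comp_43_37 comp_43_38 comp_43_39 comp_43_40 comp_43_41 comp_43_42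

lemma fwd_43: assumes nM: "n \<in> M 43" shows "n \<in> {1, 2, 6, 42, 43, 86, 258, 77658}"
proof -
  have a: "prime (43::nat)" by simp
  have nM': "n \<in> M (int 43)" using nM by simp
  note L1 = loc1[OF nM' a]
  note L2 = loc2[OF nM' a]
  have n0: "n > 0" using nM by (simp add: M_def)
  have cl: "q \<in> {2, 3, 77659, 7, 43}" if "prime q" "q dvd n" for q
    using that
  proof (induction q rule: less_induct)
    case (less q)
    show ?case
    proof (cases "q = 43")
      case True thus ?thesis by simp
    next
      case False
      have qn: "(q-1) dvd n" using L1 less.prems False by blast
      have q2: "q \<ge> 2" using prime_ge_2_nat less.prems by blast
      have "(q-1) dvd 6030842622"
      proof (rule dvd_via_pp)
        show "q - 1 \<noteq> 0" using q2 by simp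
        fix r k assume r: "prime r" and rk: "r^k dvd q - 1"
        show "r^k dvd 6030842622"
        proof (cases "k = 0")
          case True thus ?thesis by simp
        next
          case False
          have rq1: "r dvd q - 1" using rk False dvd_trans[OF dvd_power[of k r]] by auto
          then have "r \<le> q - 1" using q2 by (intro dvd_imp_le) auto
          then have rq: "r < q" using q2 by simp
          have "r dvd n" using rq1 qn dvd_trans by blast
          have rin: "r \<in> {2, 3, 77659, 7, 43}" using less.IH[OF rq r \<open>r dvd n\<close>] .
          have "k \<le> 1 \<or> (r = 43 \<and> k \<le> 2)" using L2[OF r dvd_trans[OF rk qn]] .
          then have "k = 1 \<or> (r = 43 \<and> k = 2)" using False by auto
          then show ?thesis using rin by auto
        qed
      qed
      then have "q - 1 \<in> {1, 2, 3, 6, 7, 14, 21, 42, 43, 86, 129, 258, 301, 602, 903, 1806, 1849, 3698, 5547, 11094, 12943, 25886, 38829, 77658, 77659, 155318, 232977, 465954, 543613, 1087226, 1630839, 3261678, 3339337, 6678674, 10018011, 20036022, 23375359, 46750718, 70126077, 140252154, 143591491, 287182982, 430774473, 861548946, 1005140437, 2010280874, 3015421311, 6030842622}" by (rule divs_43)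
      then show ?thesis
      proof (elim insertE emptyE)
        assume "q - 1 = 1" then have "q = 2" using q2 by arith then show ?thesis by simp
      next
        assume "q - 1 = 2" then have "q = 3" using q2 by arith then show ?thesis by simp
      next
        assume "q - 1 = 3" then have "q = 4" using q2 by arith then show ?thesis using less.prems(1) comp_43_0 by blast
      next
        assume "q - 1 = 6" then have "q = 7" using q2 by arith then show ?thesis by simp
      next
        assume "q - 1 = 7" then have "q = 8" using q2 by arith then show ?thesis using less.prems(1) comp_43_1 by blast
      next
        assume "q - 1 = 14" then have "q = 15" using q2 by arith then show ?thesis using less.prems(1) comp_43_2 by blast
      next
        assume "q - 1 = 21" then have "q = 22" using q2 by arith then show ?thesis using less.prems(1) comp_43_3 by blast
      next
        assume "q - 1 = 42" then have "q = 43" using q2 by arith then show ?thesis by simp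
      next
        assume "q - 1 = 43" then have "q = 44" using q2 by arith then show ?thesis using less.prems(1) comp_43_4 by blast
      next
        assume "q - 1 = 86" then have "q = 87" using q2 by arith then show ?thesis using less.prems(1) comp_43_5 by blast
      next
        assume "q - 1 = 129" then have "q = 130" using q2 by arith then show ?thesis using less.prems(1) comp_43_6 by blast
      next
        assume "q - 1 = 258" then have "q = 259" using q2 by arith then show ?thesis using less.prems(1) comp_43_7 by blast
      next
        assume "q - 1 = 301" then have "q = 302" using q2 by arith then show ?thesis using less.prems(1) comp_43_8 by blast
      next
        assume "q - 1 = 602" then have "q = 603" using q2 by arith then show ?thesis using less.prems(1) comp_43_9 by blast
      next
        assume "q - 1 = 903" then have "q = 904" using q2 by arith then show ?thesis using less.prems(1) comp_43_10 by blast
      next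
        assume "q - 1 = 1806" then have "q = 1807" using q2 by arith then show ?thesis using less.prems(1) comp_43_11 by blast
      next
        assume "q - 1 = 1849" then have "q = 1850" using q2 by arith then show ?thesis using less.prems(1) comp_43_12 by blast
      next
        assume "q - 1 = 3698" then have "q = 3699" using q2 by arith then show ?thesis using less.prems(1) comp_43_13 by blast
      next
        assume "q - 1 = 5547" then have "q = 5548" using q2 by arith then show ?thesis using less.prems(1) comp_43_14 by blast
      next
        assume "q - 1 = 11094" then have "q = 11095" using q2 by arith then show ?thesis using less.prems(1) comp_43_15 by blast
      next
        assume "q - 1 = 12943" then have "q = 12944" using q2 by arith then show ?thesis using less.prems(1) comp_43_16 by blast
      next
        assume "q - 1 = 25886" then have "q = 25887" using q2 by arith then show ?thesis using less.prems(1) comp_43_17 by blast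
      next
        assume "q - 1 = 38829" then have "q = 38830" using q2 by arith then show ?thesis using less.prems(1) comp_43_18 by blast
      next
        assume "q - 1 = 77658" then have "q = 77659" using q2 by arith then show ?thesis by simp
      next
        assume "q - 1 = 77659" then have "q = 77660" using q2 by arith then show ?thesis using less.prems(1) comp_43_19 by blast
      next
        assume "q - 1 = 155318" then have "q = 155319" using q2 by arith then show ?thesis using less.prems(1) comp_43_20 by blast
      next
        assume "q - 1 = 232977" then have "q = 232978" using q2 by arith then show ?thesis using less.prems(1) comp_43_21 by blast
      next
        assume "q - 1 = 465954" then have "q = 465955" using q2 by arith then show ?thesis using less.prems(1) comp_43_22 by blast
      next
        assume "q - 1 = 543613" then have "q = 543614" using q2 by arith then show ?thesis using less.prems(1) comp_43_23 by blast
      next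
        assume "q - 1 = 1087226" then have "q = 1087227" using q2 by arith then show ?thesis using less.prems(1) comp_43_24 by blast
      next
        assume "q - 1 = 1630839" then have "q = 1630840" using q2 by arith then show ?thesis using less.prems(1) comp_43_25 by blast
      next
        assume "q - 1 = 3261678" then have "q = 3261679" using q2 by arith then show ?thesis using less.prems(1) comp_43_26 by blast
      next
        assume "q - 1 = 3339337" then have "q = 3339338" using q2 by arith then show ?thesis using less.prems(1) comp_43_27 by blast
      next
        assume "q - 1 = 6678674" then have "q = 6678675" using q2 by arith then show ?thesis using less.prems(1) comp_43_28 by blast
      next
        assume "q - 1 = 10018011" then have "q = 10018012" using q2 by arith then show ?thesis using less.prems(1) comp_43_29 by blast
      next
        assume "q - 1 = 20036022" then have "q = 20036023" using q2 by arith then show ?thesis using less.prems(1) comp_43_30 by blast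
      next
        assume "q - 1 = 23375359" then have "q = 23375360" using q2 by arith then show ?thesis using less.prems(1) comp_43_31 by blast
      next
        assume "q - 1 = 46750718" then have "q = 46750719" using q2 by arith then show ?thesis using less.prems(1) comp_43_32 by blast
      next
        assume "q - 1 = 70126077" then have "q = 70126078" using q2 by arith then show ?thesis using less.prems(1) comp_43_33 by blast
      next
        assume "q - 1 = 140252154" then have "q = 140252155" using q2 by arith then show ?thesis using less.prems(1) comp_43_34 by blast
      next
        assume "q - 1 = 143591491" then have "q = 143591492" using q2 by arith then show ?thesis using less.prems(1) comp_43_35 by blast
      next
        assume "q - 1 = 287182982" then have "q = 287182983" using q2 by arith then show ?thesis using less.prems(1) comp_43_36 by blast
      next
        assume "q - 1 = 430774473" then have "q = 430774474" using q2 by arith then show ?thesis using less.prems(1) comp_43_37 by blast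
      next
        assume "q - 1 = 861548946" then have "q = 861548947" using q2 by arith then show ?thesis using less.prems(1) comp_43_38 by blast
      next
        assume "q - 1 = 1005140437" then have "q = 1005140438" using q2 by arith then show ?thesis using less.prems(1) comp_43_39 by blast
      next
        assume "q - 1 = 2010280874" then have "q = 2010280875" using q2 by arith then show ?thesis using less.prems(1) comp_43_40 by blast
      next
        assume "q - 1 = 3015421311" then have "q = 3015421312" using q2 by arith then show ?thesis using less.prems(1) comp_43_41 by blast
      next
        assume "q - 1 = 6030842622" then have "q = 6030842623" using q2 by arith then show ?thesis using less.prems(1) comp_43_42 by blast
      qed
    qed
  qed
  have nB: "n dvd 6030842622"
  proof (rule dvd_via_pp)
    show "n \<noteq> 0" using n0 by simp
    fix r k assume r: "prime r" and rk: "r^k dvd n"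
    show "r^k dvd 6030842622"
    proof (cases "k = 0")
      case True thus ?thesis by simp
    next
      case False
      have "r dvd n" using rk False dvd_trans[OF dvd_power[of k r]] by auto
      have rin: "r \<in> {2, 3, 77659, 7, 43}" using cl[OF r \<open>r dvd n\<close>] .
      have "k \<le> 1 \<or> (r = 43 \<and> k \<le> 2)" using L2[OF r rk] .
      then have "k = 1 \<or> (r = 43 \<and> k = 2)" using False by auto
      then show ?thesis using rin by auto
    qed
  qed
  note f2_1 = F[OF nM pr2 pos1]
  note f2_2 = F[OF nM pr2 pos2]
  note f3_1 = F[OF nM pr3 pos1]
  note f3_2 = F[OF nM pr3 pos2]
  note f7_1 = F[OF nM pr7 pos1]
  note f7_2 = F[OF nM pr7 pos2]
  note f43_1 = F[OF nM pr43 pos1]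
  note f43_2 = F[OF nM pr43 pos2]
  note f77659_1 = F[OF nM pr77659 pos1]
  note f77659_2 = F[OF nM pr77659 pos2]
  have "n \<in> {1, 2, 3, 6, 7, 14, 21, 42, 43, 86, 129, 258, 301, 602, 903, 1806, 1849, 3698, 5547, 11094, 12943, 25886, 38829, 77658, 77659, 155318, 232977, 465954, 543613, 1087226, 1630839, 3261678, 3339337, 6678674, 10018011, 20036022, 23375359, 46750718, 70126077, 140252154, 143591491, 287182982, 430774473, 861548946, 1005140437, 2010280874, 3015421311, 6030842622}" using nB by (rule divs_43)
  then have "n = 1 \<or> n = 2 \<or> n = 3 \<or> n = 6 \<or> n = 7 \<or> n = 14 \<or> n = 21 \<or> n = 42 \<or> n = 43 \<or> n = 86 \<or> n = 129 \<or> n = 258 \<or> n = 301 \<or> n = 602 \<or> n = 903 \<or> n = 1806 \<or> n = 1849 \<or> n = 3698 \<or> n = 5547 \<or> n = 11094 \<or> n = 12943 \<or> n = 25886 \<or> n = 38829 \<or> n = 77658 \<or> n = 77659 \<or> n = 155318 \<or> n = 232977 \<or> n = 465954 \<or> n = 543613 \<or> n = 1087226 \<or> n = 1630839 \<or> n = 3261678 \<or> n = 3339337 \<or> n = 6678674 \<or> n = 10018011 \<or> n = 20036022 \<or> n = 23375359 \<or> n = 46750718 \<or> n = 70126077 \<or> n = 140252154 \<or> n = 143591491 \<or> n = 287182982 \<or> n = 430774473 \<or> n = 861548946 \<or> n = 1005140437 \<or> n = 2010280874 \<or> n = 3015421311 \<or> n = 6030842622" by simp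
  then show ?thesis using f2_1 f2_2 f3_1 f3_2 f7_1 f7_2 f43_1 f43_2 f77659_1 f77659_2 by (elim disjE) simp_all
qed

lemma bwd_43: assumes "n \<in> {1, 2, 6, 42, 43, 86, 258, 77658}" shows "n \<in> M 43"
proof -
  have m0: "1 \<in> M 43"
  proof (rule memM)
    show "(0::nat) < 1" by simp
    show "int 1 dvd S 1 1 - 43" by simp
  qed
  have m1: "2 \<in> M 43"
  proof (rule memM)
    show "(0::nat) < 2" by simp
    have d0: "int (2^1) dvd S 2 2 - 43" by (rule R) simp_all
    show "int 2 dvd S 2 2 - 43" using d0 by simp
  qed
  have m2: "6 \<in> M 43"
  proof (rule memM)
    show "(0::nat) < 6" by simp
    have d0: "int (2^1) dvd S 6 6 - 43" by (rule R) simp_all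
    have d1: "int (3^1) dvd S 6 6 - 43" by (rule R) simp_all
    have c1: "int (2^1) * int (3^1) dvd S 6 6 - 43" by (rule divides_mult[OF d0 d1]) (simp add: coprime_iff_gcd_eq_1 gcd_non_0_int)
    show "int 6 dvd S 6 6 - 43" using c1 by simp
  qed
  have m3: "42 \<in> M 43"
  proof (rule memM)
    show "(0::nat) < 42" by simp
    have d0: "int (2^1) dvd S 42 42 - 43" by (rule R) simp_all
    have d1: "int (3^1) dvd S 42 42 - 43" by (rule R) simp_all
    have d2: "int (7^1) dvd S 42 42 - 43" by (rule R) simp_all
    have c1: "int (2^1) * int (3^1) dvd S 42 42 - 43" by (rule divides_mult[OF d0 d1]) (simp add: coprime_iff_gcd_eq_1 gcd_non_0_int)
    have c2: "(int (2^1) * int (3^1)) * int (7^1) dvd S 42 42 - 43" by (rule divides_mult[OF c1 d2]) (simp add: coprime_iff_gcd_eq_1 gcd_non_0_int)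
    show "int 42 dvd S 42 42 - 43" using c2 by simp
  qed
  have m4: "43 \<in> M 43"
  proof (rule memM)
    show "(0::nat) < 43" by simp
    have d0: "int (43^1) dvd S 43 43 - 43" by (rule R) simp_all
    show "int 43 dvd S 43 43 - 43" using d0 by simp
  qed
  have m5: "86 \<in> M 43"
  proof (rule memM)
    show "(0::nat) < 86" by simp
    have d0: "int (2^1) dvd S 86 86 - 43" by (rule R) simp_all
    have d1: "int (43^1) dvd S 86 86 - 43" by (rule R) simp_all
    have c1: "int (2^1) * int (43^1) dvd S 86 86 - 43" by (rule divides_mult[OF d0 d1]) (simp add: coprime_iff_gcd_eq_1 gcd_non_0_int)
    show "int 86 dvd S 86 86 - 43" using c1 by simp
  qed
  have m6: "258 \<in> M 43"
  proof (rule memM)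
    show "(0::nat) < 258" by simp
    have d0: "int (2^1) dvd S 258 258 - 43" by (rule R) simp_all
    have d1: "int (3^1) dvd S 258 258 - 43" by (rule R) simp_all
    have d2: "int (43^1) dvd S 258 258 - 43" by (rule R) simp_all
    have c1: "int (2^1) * int (3^1) dvd S 258 258 - 43" by (rule divides_mult[OF d0 d1]) (simp add: coprime_iff_gcd_eq_1 gcd_non_0_int)
    have c2: "(int (2^1) * int (3^1)) * int (43^1) dvd S 258 258 - 43" by (rule divides_mult[OF c1 d2]) (simp add: coprime_iff_gcd_eq_1 gcd_non_0_int)
    show "int 258 dvd S 258 258 - 43" using c2 by simp
  qed
  have m7: "77658 \<in> M 43"
  proof (rule memM)
    show "(0::nat) < 77658" by simp
    have d0: "int (2^1) dvd S 77658 77658 - 43" by (rule R) simp_all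
    have d1: "int (3^1) dvd S 77658 77658 - 43" by (rule R) simp_all
    have d2: "int (7^1) dvd S 77658 77658 - 43" by (rule R) simp_all
    have d3: "int (43^2) dvd S 77658 77658 - 43" by (rule R) simp_all
    have c1: "int (2^1) * int (3^1) dvd S 77658 77658 - 43" by (rule divides_mult[OF d0 d1]) (simp add: coprime_iff_gcd_eq_1 gcd_non_0_int)
    have c2: "(int (2^1) * int (3^1)) * int (7^1) dvd S 77658 77658 - 43" by (rule divides_mult[OF c1 d2]) (simp add: coprime_iff_gcd_eq_1 gcd_non_0_int)
    have c3: "((int (2^1) * int (3^1)) * int (7^1)) * int (43^2) dvd S 77658 77658 - 43" by (rule divides_mult[OF c2 d3]) (simp add: coprime_iff_gcd_eq_1 gcd_non_0_int)
    show "int 77658 dvd S 77658 77658 - 43" using c3 by simp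
  qed
  show ?thesis using assms m0 m1 m2 m3 m4 m5 m6 m7 by auto
qed

theorem mainTheorem9:
  shows "M 7 = {1, 2, 6, 7, 14, 294, 12642} \<and> M 43 = {1, 2, 6, 42, 43, 86, 258, 77658}"
  using fwd_7 bwd_7 fwd_43 bwd_43 by blast

end
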